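(* Let $k,n\in\mathbb N_{>0}$. There is a rational piecewise linear FNN $\mathfrak F$ of input and output dimension $1$ and size polynomial in $n$ and $k$ such that $$\Pr_{r\sim\mathcal U}\big(\mathfrak F(r)\in\{0,\dots,n-1\}\big)\ge1-2^{-k},$$ and for all $i\in\{0,\dots,n-1\}$, $$\frac{1-2^{-k}}{n}\le\Pr_{r\sim\mathcal U}\big(\mathfrak F(r)=i\big)\le\frac1n.$$ Furthermore, $\mathfrak F$ only uses $\mathrm{relu}$-activations.
   Context: $\mathcal U$ denotes the uniform distribution on $[0,1]$. An FNN has a finite dag skeleton $(V,E)$, activation functions $\mathfrak a_v$, weights $w_e$ and biases $b_v$; sources are inputs, sinks outputs; a non-input node computes $\mathfrak a_v(b_v+\sum_{uv\in E}w_{uv}\cdot\text{value}(u))$. $\mathrm{relu}(x)=\max\{0,x\}$. A dyadic rational is a rational with a power-of-two denominator. The FNN is rational piecewise linear if all weights and biases are dyadic rationals and all activations are continuous piecewise linear functions whose thresholds, slopes and constants (minimal representation) are dyadic. Its size is the maximum of its bitsize (total binary representation size of skeleton, weights, biases and activations) and its weight $|V|+|E|+\max_e|w_e|+\max_v|b_v|+\max_v(\lambda(\mathfrak a_v)+\mathfrak a_v(0))$, $\lambda(\mathfrak a_v)$ the least integer Lipschitz constant of $\mathfrak a_v$. *)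

theory Defs
  imports "HOL-Analysis.Analysis"
begin

text \<open>The skeleton is a finite dag whose nodes are natural numbers; acyclicity is
represented (w.l.o.g.) by requiring every edge to go from a smaller to a larger node
(a topological numbering).\<close>

record fnn =
  nodes  :: "nat set"
  edges  :: "(nat \<times> nat) set"
  act    :: "nat \<Rightarrow> real \<Rightarrow> real"
  weight :: "nat \<times> nat \<Rightarrow> real"
  bias   :: "nat \<Rightarrow> real"

definition fnn_wf :: "fnn \<Rightarrow> bool" where
  "fnn_wf N \<longleftrightarrow> finite (nodes N) \<and> edges N \<subseteq> nodes N \<times> nodes N
      \<and> (\<forall>(u,v) \<in> edges N. u < v)"

definition fnn_sources :: "fnn \<Rightarrow> nat set" where
  "fnn_sources N = {v \<in> nodes N. \<not> (\<exists>u. (u, v) \<in> edges N)}"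

definition fnn_sinks :: "fnn \<Rightarrow> nat set" where
  "fnn_sinks N = {v \<in> nodes N. \<not> (\<exists>w. (v, w) \<in> edges N)}"

definition fnn_noninput :: "fnn \<Rightarrow> nat set" where
  "fnn_noninput N = nodes N - fnn_sources N"

text \<open>Value of node v when every input node receives the value x
(used for networks of input dimension 1).\<close>
function fnn_val :: "fnn \<Rightarrow> real \<Rightarrow> nat \<Rightarrow> real" where
  "fnn_val N x v =
     (if v \<in> fnn_sources N then x
      else act N v (bias N v +
             (\<Sum>u\<in>{u. u < v \<and> (u, v) \<in> edges N}. weight N (u, v) * fnn_val N x u)))"
  by pat_completeness auto
termination by (relation "Wellfounded.measure (\<lambda>(N, x, v). v)") auto

definition fnn_in :: "fnn \<Rightarrow> nat" where
  "fnn_in N = (THE v. v \<in> fnn_sources N)"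

definition fnn_out :: "fnn \<Rightarrow> nat" where
  "fnn_out N = (THE v. v \<in> fnn_sinks N)"

definition fnn_fun :: "fnn \<Rightarrow> real \<Rightarrow> real" where
  "fnn_fun N x = fnn_val N x (fnn_out N)"

definition fnn_dim11 :: "fnn \<Rightarrow> bool" where
  "fnn_dim11 N \<longleftrightarrow> card (fnn_sources N) = 1 \<and> card (fnn_sinks N) = 1"

definition relu :: "real \<Rightarrow> real" where
  "relu x = max 0 x"

definition fnn_relu_only :: "fnn \<Rightarrow> bool" where
  "fnn_relu_only N \<longleftrightarrow> (\<forall>v \<in> fnn_noninput N. act N v = relu)"

definition dyadic :: "real \<Rightarrow> bool" where
  "dyadic q \<longleftrightarrow> (\<exists>(a::int) (e::nat). q = of_int a / 2 ^ e)"

text \<open>A (continuous) piecewise linear representation: strictly increasing thresholds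
ts and affine pieces ps = (slope, constant); piece i is used on [ts!(i-1), ts!i].\<close>
definition pwl_rep :: "(real \<Rightarrow> real) \<Rightarrow> real list \<Rightarrow> (real \<times> real) list \<Rightarrow> bool" where
  "pwl_rep f ts ps \<longleftrightarrow> sorted_wrt (<) ts \<and> length ps = length ts + 1 \<and>
     (\<forall>x. \<forall>i < length ps. (i = 0 \<or> ts ! (i - 1) \<le> x) \<and> (i = length ts \<or> x \<le> ts ! i)
          \<longrightarrow> f x = fst (ps ! i) * x + snd (ps ! i))"

definition dyadic_pwl_rep :: "(real \<Rightarrow> real) \<Rightarrow> real list \<Rightarrow> (real \<times> real) list \<Rightarrow> bool" where
  "dyadic_pwl_rep f ts ps \<longleftrightarrow> pwl_rep f ts ps \<and> (\<forall>t \<in> set ts. dyadic t)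
     \<and> (\<forall>p \<in> set ps. dyadic (fst p) \<and> dyadic (snd p))"

definition dyadic_pwl :: "(real \<Rightarrow> real) \<Rightarrow> bool" where
  "dyadic_pwl f \<longleftrightarrow> continuous_on UNIV f \<and> (\<exists>ts ps. dyadic_pwl_rep f ts ps)"

definition rational_pwl_fnn :: "fnn \<Rightarrow> bool" where
  "rational_pwl_fnn N \<longleftrightarrow> fnn_wf N
     \<and> (\<forall>e \<in> edges N. dyadic (weight N e))
     \<and> (\<forall>v \<in> fnn_noninput N. dyadic (bias N v) \<and> dyadic_pwl (act N v))"

definition int_bits :: "int \<Rightarrow> nat" where
  "int_bits a = 1 + (LEAST m::nat. \<bar>a\<bar> < 2 ^ m)"

definition nat_bits :: "nat \<Rightarrow> nat" where
  "nat_bits n = int_bits (int n)"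

definition dyadic_bits :: "real \<Rightarrow> nat" where
  "dyadic_bits q = (LEAST s. \<exists>(a::int) (e::nat). q = of_int a / 2 ^ e \<and> s = int_bits a + e + 1)"

definition act_bits :: "(real \<Rightarrow> real) \<Rightarrow> nat" where
  "act_bits f = (LEAST s. \<exists>ts ps. dyadic_pwl_rep f ts ps \<and>
      s = 1 + sum_list (map dyadic_bits ts)
            + sum_list (map (\<lambda>p. dyadic_bits (fst p) + dyadic_bits (snd p)) ps))"

definition fnn_bitsize :: "fnn \<Rightarrow> nat" where
  "fnn_bitsize N =
     (\<Sum>v\<in>nodes N. nat_bits v)
   + (\<Sum>v\<in>fnn_noninput N. dyadic_bits (bias N v) + act_bits (act N v))
   + (\<Sum>e\<in>edges N. nat_bits (fst e) + nat_bits (snd e) + dyadic_bits (weight N e))"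

definition lip_const :: "(real \<Rightarrow> real) \<Rightarrow> nat" where
  "lip_const f = (LEAST L::nat. \<forall>x y. \<bar>f x - f y\<bar> \<le> real L * \<bar>x - y\<bar>)"

definition fnn_weight :: "fnn \<Rightarrow> real" where
  "fnn_weight N =
     real (card (nodes N)) + real (card (edges N))
   + Max (insert 0 ((\<lambda>e. \<bar>weight N e\<bar>) ` edges N))
   + Max (insert 0 ((\<lambda>v. \<bar>bias N v\<bar>) ` fnn_noninput N))
   + Max (insert 0 ((\<lambda>v. real (lip_const (act N v)) + act N v 0) ` fnn_noninput N))"

definition fnn_size :: "fnn \<Rightarrow> real" where
  "fnn_size N = max (real (fnn_bitsize N)) (fnn_weight N)"

end

theory Submission
  imports Defs
begin

lemma int_bits_le: "\<bar>a\<bar> < 2^M \<Longrightarrow> int_bits a \<le> 1 + M"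
  unfolding int_bits_def by (simp add: Least_le)

lemma nat_bits_le: "nat_bits v \<le> v + 1"
proof -
  have "int v < 2^v" by (metis of_nat_less_iff of_nat_numeral of_nat_power less_exp)
  then show ?thesis unfolding nat_bits_def using int_bits_le[of "int v" v] by simp
qed

lemma dyadic_bits_le: "dyadic_bits (of_int a / 2^e) \<le> int_bits a + e + 1"
  unfolding dyadic_bits_def by (rule Least_le) blast

lemma dyadic_bits_le': "x = of_int a / 2^e \<Longrightarrow> \<bar>a\<bar> < 2^M \<Longrightarrow> dyadic_bits x \<le> M + e + 2"
  using dyadic_bits_le[of a e] int_bits_le[of a M] by simp

lemma dyadicI: "x = of_int a / 2^e \<Longrightarrow> dyadic x" unfolding dyadic_def by blast

lemma relu_rep: "dyadic_pwl_rep relu [0] [(0,0),(1,0)]"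
  unfolding dyadic_pwl_rep_def pwl_rep_def
proof (intro conjI)
  show "\<forall>x. \<forall>i<length [(0::real, 0::real), (1, 0)].
       (i = 0 \<or> [0::real] ! (i - 1) \<le> x) \<and> (i = length [0::real] \<or> x \<le> [0::real] ! i) \<longrightarrow>
       relu x = fst ([(0, 0), (1, 0)] ! i) * x + snd ([(0, 0), (1, 0)] ! i)"
    by (auto simp: relu_def less_Suc_eq numeral_2_eq_2)
  show "\<forall>t\<in>set [0::real]. dyadic t" by (auto intro: dyadicI[of _ 0 0])
  show "\<forall>p\<in>set [(0::real, 0::real), (1, 0)]. dyadic (fst p) \<and> dyadic (snd p)"
    by (auto intro: dyadicI[of _ 0 0] dyadicI[of _ 1 0])
qed simp_all

lemma relu_pwl: "dyadic_pwl relu"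
  unfolding dyadic_pwl_def using relu_rep unfolding relu_def
  by (auto intro!: continuous_intros)

lemma act_bits_relu: "act_bits relu \<le> 12"
proof -
  have "act_bits relu \<le> 1 + sum_list (map dyadic_bits [0]) + sum_list (map (\<lambda>p. dyadic_bits (fst p) + dyadic_bits (snd p)) [(0,0),(1,0)])"
    unfolding act_bits_def by (rule Least_le) (use relu_rep in blast)
  moreover have "dyadic_bits 0 \<le> 2" using dyadic_bits_le'[of 0 0 0 0] by simp
  moreover have "dyadic_bits 1 \<le> 3" using dyadic_bits_le'[of 1 1 0 1] by simp
  ultimately show ?thesis by simp
qed

lemma lip_relu: "lip_const relu \<le> 1"
  unfolding lip_const_def by (rule Least_le) (auto simp: relu_def)


locale cons =
  fixes n k :: nat
  assumes npos: "n > 0" and kpos: "k > 0"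
begin

definition "m = n + k + 1"
definition "q = 2^m div n"
definition "B = m + 3"
definition "Om = n * B"
definition "tt v = (v - 1) mod B"
definition "jj v = (v - 1) div B"
definition "p j = real ((j+1)*q) - 1"
definition "a j = p j / 2^m"
definition "E = {(u,v). 1 \<le> v \<and> v \<le> Om \<and> ((tt v = 0 \<and> u = 0) \<or> (1 \<le> tt v \<and> u = v - 1)
   \<or> (tt v = m+2 \<and> u = v - 2) \<or> (tt v = m+2 \<and> B < v \<and> u = v - B))}"
definition "W e = (case e of (u,v) \<Rightarrow> if tt v = m+2 then (if u = v - 1 then -1 else 1)
    else if 1 \<le> tt v \<and> tt v \<le> m then 2 else (1::real))"
definition "Bi v = (if tt v = 0 then - a (jj v) else if tt v = m+1 then -1 else (0::real))"
definition "N = \<lparr>nodes = {..Om}, edges = E, act = (\<lambda>_. relu), weight = W, bias = Bi\<rparr>"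

definition "cl j r = min 1 (max 0 (2^m * r - p j))"
definition "cc j r = 2^m * relu (r - a j) - relu (2^m * relu (r - a j) - 1)"
definition "myval r v = (if v = 0 then r else if tt v \<le> m then 2^(tt v) * relu (r - a (jj v))
   else if tt v = m+1 then relu (2^m * relu (r - a (jj v)) - 1) else (\<Sum>i\<le>jj v. cc i r))"

lemma B_ge: "B \<ge> 3" by (simp add: B_def)
lemma tt_lt: "tt v < B" using B_ge by (simp add: tt_def)
lemma decomp: "v \<ge> 1 \<Longrightarrow> v = 1 + jj v * B + tt v"
  unfolding tt_def jj_def using div_mult_mod_eq[of "v-1" B] by simp
lemma decomp_inv: assumes "t < B" shows "jj (1 + j*B + t) = j" "tt (1 + j*B + t) = t"
  using assms by (simp_all add: tt_def jj_def)

lemma q_pos: "q \<ge> 1"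
proof -
  have "n < 2^n" by simp
  also have "... \<le> 2^m" by (rule power_increasing) (auto simp: m_def)
  finally have "n div n \<le> 2^m div n" by (intro div_le_mono) simp
  then show ?thesis using npos by (simp add: q_def)
qed
lemma nq_le: "n * q \<le> 2^m" by (simp add: q_def)
lemma nq_gt: "2^m < n * (q+1)"
  using npos by (simp add: q_def) (metis add.commute dividend_less_times_div)

lemma E_lt: "(u,v) \<in> E \<Longrightarrow> u < v"
  using B_ge by (auto simp: E_def)

lemma inc_eq: assumes "1 \<le> v" "v \<le> Om"
  shows "{u. u < v \<and> (u,v) \<in> E} = (if tt v = 0 then {0} else if tt v \<le> m+1 then {v - 1}
     else {v-1, v-2} \<union> (if B < v then {v - B} else {}))"
  using assms tt_lt[of v] B_ge unfolding E_def B_def by auto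

lemma Om_ge: "Om \<ge> B" using npos by (simp add: Om_def)

lemma sources: "fnn_sources N = {0}"
proof -
  have "\<exists>u. (u,v) \<in> E" if "1 \<le> v" "v \<le> Om" for v
  proof (cases "tt v = 0")
    case True then show ?thesis using that by (auto simp: E_def)
  next
    case False then show ?thesis using that by (auto simp: E_def)
  qed
  then have "v \<in> fnn_sources N \<longleftrightarrow> v = 0" for v
    unfolding fnn_sources_def N_def using E_lt[of _ 0]
    by (cases "v = 0") auto
  then show ?thesis by auto
qed

lemma sinks: "fnn_sinks N = {Om}"
proof -
  have "\<exists>w. (v,w) \<in> E" if "v < Om" for v
  proof (cases "v = 0")
    case True
    have "tt 1 = 0" by (simp add: tt_def)
    then have "(0,1) \<in> E" using Om_ge B_ge by (auto simp: E_def)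
    then show ?thesis using True by blast
  next
    case False
    show ?thesis
    proof (cases "tt v \<le> m+1")
      case True
      have "v + 1 = 1 + jj v * B + (tt v + 1)" using decomp[of v] False by simp
      then have "tt (v+1) = tt v + 1" using decomp_inv(2)[of "tt v + 1" "jj v"] True by (simp add: B_def)
      then have "(v, v+1) \<in> E" using that unfolding E_def by auto
      then show ?thesis by blast
    next
      case F2: False
      have tv: "tt v = m + 2" using F2 tt_lt[of v] by (simp add: B_def)
      have e: "v + B = 1 + (jj v + 1) * B + tt v" using decomp[of v] False by simp
      have "tt (v+B) = tt v" by (subst e, rule decomp_inv(2), rule tt_lt)
      moreover have "v + B \<le> Om"
      proof -
        have "v = (jj v + 1) * B" using decomp[of v] False tv by (simp add: B_def)
        moreover have "Om = n * B" by (simp add: Om_def)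
        ultimately have "jj v + 1 < n" using that by (metis mult_less_cancel2)
        then have "(jj v + 2) * B \<le> n * B" by (intro mult_le_mono1) simp
        then show ?thesis using \<open>v = (jj v + 1) * B\<close> Om_def by (simp add: algebra_simps)
      qed
      ultimately have "(v, v+B) \<in> E" using that tv False unfolding E_def by auto
      then show ?thesis by blast
    qed
  qed
  moreover have "\<not> (\<exists>w. (Om,w) \<in> E)"
  proof -
    have "w \<le> Om" if "(x,w)\<in>E" for x w using that by (simp add: E_def)
    then show ?thesis using E_lt by (meson leD)
  qed
  ultimately show ?thesis unfolding fnn_sinks_def N_def by (auto simp: le_less)
qed

lemma out: "fnn_out N = Om" unfolding fnn_out_def sinks by simp

declare fnn_val.simps[simp del]

lemma relu_id: "x \<ge> 0 \<Longrightarrow> relu x = x" by (simp add: relu_def)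
lemma relu_nn: "relu x \<ge> 0" by (simp add: relu_def)
lemma cc_nn: "cc j r \<ge> 0" by (simp add: cc_def relu_def)

lemma shift1: assumes "1 \<le> v" "1 \<le> tt v"
  shows "1 \<le> v - 1" "tt (v-1) = tt v - 1" "jj (v-1) = jj v"
proof -
  have e: "v - 1 = 1 + jj v * B + (tt v - 1)" using decomp[OF assms(1)] assms(2) by simp
  show "1 \<le> v - 1" using e by simp
  show "tt (v-1) = tt v - 1" by (subst e, rule decomp_inv(2)) (use tt_lt[of v] in simp)
  show "jj (v-1) = jj v" by (subst e, rule decomp_inv(1)) (use tt_lt[of v] in simp)
qed

lemma shift2: assumes "1 \<le> v" "tt v = m+2"
  shows "1 \<le> v - 2" "tt (v-2) = m" "jj (v-2) = jj v"
proof -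
  have e: "v - 2 = 1 + jj v * B + m" using decomp[OF assms(1)] assms(2) by simp
  show "1 \<le> v - 2" using e by simp
  show "tt (v-2) = m" by (subst e, rule decomp_inv(2)) (simp add: B_def)
  show "jj (v-2) = jj v" by (subst e, rule decomp_inv(1)) (simp add: B_def)
qed

lemma shiftB: assumes "1 \<le> v" "tt v = m+2"
  shows "B < v \<longleftrightarrow> jj v \<ge> 1"
    "jj v \<ge> 1 \<Longrightarrow> 1 \<le> v - B \<and> tt (v-B) = m+2 \<and> jj (v-B) = jj v - 1"
proof -
  have d: "v = 1 + jj v * B + (m+2)" using decomp[OF assms(1)] assms(2) by simp
  show "B < v \<longleftrightarrow> jj v \<ge> 1"
  proof
    assume "B < v" then show "jj v \<ge> 1" using d by (cases "jj v") (auto simp: B_def)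
  next
    assume "jj v \<ge> 1" then show "B < v" using d by (cases "jj v") (auto simp: B_def)
  qed
  assume j: "jj v \<ge> 1"
  have e: "v - B = 1 + (jj v - 1) * B + (m+2)" using d j by (cases "jj v") (auto simp: B_def)
  have "tt (v-B) = m+2" by (subst e, rule decomp_inv(2)) (simp add: B_def)
  moreover have "jj (v-B) = jj v - 1" by (subst e, rule decomp_inv(1)) (simp add: B_def)
  ultimately show "1 \<le> v - B \<and> tt (v-B) = m+2 \<and> jj (v-B) = jj v - 1" using e by simp
qed

lemma mv1: "1 \<le> v \<Longrightarrow> tt v \<le> m \<Longrightarrow> myval r v = 2^tt v * relu (r - a (jj v))"
  by (simp add: myval_def)
lemma mv2: "1 \<le> v \<Longrightarrow> tt v = m+1 \<Longrightarrow> myval r v = relu (2^m * relu (r - a (jj v)) - 1)"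
  by (simp add: myval_def)
lemma mv3: "1 \<le> v \<Longrightarrow> tt v = m+2 \<Longrightarrow> myval r v = (\<Sum>i\<le>jj v. cc i r)"
  by (simp add: myval_def)

lemma val_step: assumes "1 \<le> v" "v \<le> Om"
  shows "fnn_val N r v = relu (Bi v + (\<Sum>u\<in>{u. u < v \<and> (u,v) \<in> E}. W (u,v) * fnn_val N r u))"
proof -
  have "v \<notin> fnn_sources N" using sources assms by simp
  then show ?thesis by (subst fnn_val.simps) (simp add: N_def)
qed

lemma val_eq: "v \<le> Om \<Longrightarrow> fnn_val N r v = myval r v"
proof (induction v rule: less_induct)
  case (less v)
  show ?case
  proof (cases "v = 0")
    case True
    then show ?thesis using sources by (subst fnn_val.simps) (simp add: myval_def)
  next
    case False
    then have v1: "1 \<le> v" by simp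
    note st = val_step[OF v1 less.prems] inc_eq[OF v1 less.prems]
    consider "tt v = 0" | "1 \<le> tt v" "tt v \<le> m" | "tt v = m+1" | "tt v = m+2"
      using tt_lt[of v] by (force simp: B_def)
    then show ?thesis
    proof cases
      case 1
      have "fnn_val N r 0 = r" using sources by (subst fnn_val.simps) simp
      then show ?thesis using st 1 False by (simp add: W_def Bi_def myval_def)
    next
      case 2
      note s1 = shift1[OF v1 2(1)]
      have IH: "fnn_val N r (v-1) = 2^(tt v - 1) * relu (r - a (jj v))"
      proof -
        have "fnn_val N r (v-1) = myval r (v-1)" using less.IH[of "v-1"] less.prems v1 by simp
        then show ?thesis using s1 2 mv1[of "v-1" r] by simp
      qed
      have "(2::real) * 2^(tt v - 1) = 2^(tt v)" using 2 by (cases "tt v") auto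
      then have "2 * fnn_val N r (v-1) = 2^(tt v) * relu (r - a (jj v))" using IH by simp
      moreover have "2^(tt v) * relu (r - a (jj v)) \<ge> 0" using relu_nn by simp
      ultimately show ?thesis using st 2 False
        by (simp add: W_def Bi_def myval_def relu_id)
    next
      case 3
      have s1: "1 \<le> v - 1" "tt (v-1) = m" "jj (v-1) = jj v" using shift1[OF v1] 3 by auto
      have IH: "fnn_val N r (v-1) = 2^m * relu (r - a (jj v))"
      proof -
        have "fnn_val N r (v-1) = myval r (v-1)" using less.IH[of "v-1"] less.prems v1 by simp
        then show ?thesis using s1 mv1[of "v-1" r] mv2[of "v-1" r] by simp
      qed
      show ?thesis using st 3 False IH by (simp add: W_def Bi_def myval_def add.commute)
    next
      case 4
      have s1: "1 \<le> v - 1" "tt (v-1) = m+1" "jj (v-1) = jj v" using shift1[OF v1] 4 by auto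
      note s2 = shift2[OF v1 4]
      note sB = shiftB[OF v1 4]
      have IH1: "fnn_val N r (v-1) = relu (2^m * relu (r - a (jj v)) - 1)"
      proof -
        have "fnn_val N r (v-1) = myval r (v-1)" using less.IH[of "v-1"] less.prems v1 by simp
        then show ?thesis using s1 mv1[of "v-1" r] mv2[of "v-1" r] by simp
      qed
      have IH2: "fnn_val N r (v-2) = 2^m * relu (r - a (jj v))"
      proof -
        have "fnn_val N r (v-2) = myval r (v-2)" using less.IH[of "v-2"] less.prems v1 by simp
        then show ?thesis using s2 mv1[of "v-2" r] by simp
      qed
      have v3: "v \<ge> 3" using decomp[OF v1] 4 by simp
      have ne: "v - 1 \<noteq> v - 2" "v - B \<noteq> v - 1" "v - B \<noteq> v - 2" using v3 B_ge by auto
      have W1: "W (v-1, v) = -1" "W (v-2,v) = 1" "W (v-B, v) = 1" using 4 ne by (auto simp: W_def)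
      have base: "W (v-1, v) * fnn_val N r (v-1) + W (v-2,v) * fnn_val N r (v-2) = cc (jj v) r"
        using W1 IH1 IH2 by (simp add: cc_def)
      show ?thesis
      proof (cases "B < v")
        case True
        then have j1: "jj v \<ge> 1" using sB by simp
        have sb: "1 \<le> v - B" "tt (v-B) = m+2" "jj (v-B) = jj v - 1" using sB(2)[OF j1] by auto
        have IH3: "fnn_val N r (v-B) = (\<Sum>i\<le>jj v - 1. cc i r)"
        proof -
          have "fnn_val N r (v-B) = myval r (v-B)" using less.IH[of "v-B"] less.prems True B_ge by simp
          then show ?thesis using sb mv3[of "v-B" r] by simp
        qed
        have sm: "(\<Sum>i\<le>jj v. cc i r) = (\<Sum>i\<le>jj v - 1. cc i r) + cc (jj v) r"
          using j1 by (cases "jj v") (auto simp: atMost_Suc)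
        have "(\<Sum>u\<in>{u. u < v \<and> (u,v) \<in> E}. W (u,v) * fnn_val N r u)
              = (\<Sum>i\<le>jj v. cc i r)"
          using st(2) 4 True ne base IH3 W1(3) sm by (simp add: algebra_simps)
        moreover have "(\<Sum>i\<le>jj v. cc i r) \<ge> 0" using cc_nn by (simp add: sum_nonneg)
        ultimately show ?thesis using st(1) 4 mv3[OF v1 4, of r] by (simp add: Bi_def relu_id)
      next
        case False
        then have j0: "jj v = 0" using sB by simp
        have "(\<Sum>u\<in>{u. u < v \<and> (u,v) \<in> E}. W (u,v) * fnn_val N r u)
              = (\<Sum>i\<le>jj v. cc i r)"
          using st(2) 4 False ne base j0 by simp
        moreover have "(\<Sum>i\<le>jj v. cc i r) \<ge> 0" using cc_nn by (simp add: sum_nonneg)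
        ultimately show ?thesis using st(1) 4 mv3[OF v1 4, of r] by (simp add: Bi_def relu_id)
      qed
    qed
  qed
qed

lemma cc_cl: "cc j r = cl j r"
proof -
  have e: "(2::real)^m * (r - p j / 2^m) = 2^m * r - p j" by (simp add: right_diff_distrib)
  have h: "2^m * relu (r - a j) = max 0 (2^m * r - p j)"
  proof (cases "r - a j \<ge> 0")
    case True
    then show ?thesis using e unfolding relu_def a_def
      by (metis max.absorb2 max.cobounded1 order.trans zero_le_mult_iff zero_le_numeral zero_le_power)
  next
    case False
    then have "(2::real)^m * (r - a j) < 0" by (intro mult_pos_neg) simp_all
    then have "2^m * r - p j < 0" using e unfolding a_def by simp
    then show ?thesis using False unfolding relu_def by simp
  qed
  have g: "x - max 0 (x - 1) = min 1 (x::real)" if "x \<ge> 0" for x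
    using that by (cases "x \<le> 1") (simp_all add: max_def min_def)
  show ?thesis unfolding cc_def cl_def h by (simp add: relu_def g)
qed

lemma Om_dec: "Om = 1 + (n-1) * B + (m+2)"
proof -
  have "Om = (n-1)*B + B" using npos unfolding Om_def by (metis Suc_diff_1 mult_Suc add.commute)
  then show ?thesis by (simp add: B_def)
qed

lemma F_eq: "fnn_fun N r = (\<Sum>j<n. cl j r)"
proof -
  have t: "tt Om = m+2" "jj Om = n - 1" using decomp_inv[of "m+2" "n-1"] Om_dec by (simp_all add: B_def)
  have "fnn_fun N r = myval r Om" unfolding fnn_fun_def out using val_eq by simp
  also have "... = (\<Sum>i\<le>n-1. cc i r)" using mv3[of Om r] t Om_dec by simp
  also have "... = (\<Sum>j<n. cc j r)"
  proof -
    have "{..n-1} = {..<n}" using npos by auto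
    then show ?thesis by simp
  qed
  also have "... = (\<Sum>j<n. cl j r)" using cc_cl by simp
  finally show ?thesis .
qed

lemma cl_bounds: "0 \<le> cl j r" "cl j r \<le> 1" by (auto simp: cl_def)

lemma sum_split: "(i::nat) \<le> n' \<Longrightarrow> sum f {..<n'} = sum f {..<i} + sum f {i..<n'}"
proof -
  assume "i \<le> n'"
  then have "{..<n'} = {..<i} \<union> {i..<n'}" by auto
  moreover have "sum f ({..<i} \<union> {i..<n'}) = sum f {..<i} + sum f {i..<n'}"
    by (rule sum.union_disjoint) auto
  ultimately show ?thesis by simp
qed

lemma cl0: "2^m*r \<le> p j \<Longrightarrow> cl j r = 0" by (simp add: cl_def)
lemma cl1: "p j + 1 \<le> 2^m*r \<Longrightarrow> cl j r = 1" by (simp add: cl_def)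
lemma p_mono: "j \<le> j' \<Longrightarrow> p j \<le> p j'"
  unfolding p_def by (simp add: mult_le_mono1 del: of_nat_mult)
lemma p_i: "p i = real ((i+1)*q) - 1" by (simp add: p_def)


lemma level_exact:
  assumes "i < n" "real (i*q) \<le> 2^m * r" "2^m * r \<le> real ((i+1)*q) - 1"
  shows "(\<Sum>j<n. cl j r) = real i"
proof -
  have "cl j r = (if j < i then 1 else 0)" if "j < n" for j
  proof (cases "j < i")
    case True
    then have "p j \<le> p (i-1)" by (intro p_mono) simp
    moreover have "p (i-1) = real (i*q) - 1" using True p_i[of "i-1"] by simp
    ultimately show ?thesis using True assms by (intro trans[OF cl1]) simp_all
  next
    case False
    then have "p i \<le> p j" by (intro p_mono) simp
    then show ?thesis using False assms p_i[of i] by (intro trans[OF cl0]) simp_all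
  qed
  then have "(\<Sum>j<n. cl j r) = (\<Sum>j<n. if j < i then 1 else 0)" by simp
  also have "... = (\<Sum>j<i. 1) + (\<Sum>j\<in>{i..<n}. 0)"
    using sum_split[of i n "\<lambda>j. if j < i then (1::real) else 0"] assms(1) by simp
  finally show ?thesis by simp
qed

lemma level_upper:
  assumes "i < n" "0 \<le> r" "(\<Sum>j<n. cl j r) = real i"
  shows "real (i*q) \<le> 2^m * r" "2^m * r \<le> real ((i+1)*q) - 1"
proof -
  have Q: "real q \<ge> 1" using q_pos by simp
  show "real (i*q) \<le> 2^m * r"
  proof (rule ccontr)
    assume c: "\<not> ?thesis"
    then have i1: "i \<ge> 1" using assms(2) by (cases i) auto
    have z: "cl j r = 0" if "i \<le> j" for j
    proof (rule cl0)
      have "p i \<le> p j" using that by (intro p_mono)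
      moreover have "real (i*q) \<le> p i" using p_i[of i] Q by simp
      ultimately show "2^m*r \<le> p j" using c by simp
    qed
    have "p (i-1) = real (i*q) - 1" using i1 p_i[of "i-1"] by simp
    then have lt: "cl (i-1) r < 1" using c by (simp add: cl_def)
    obtain i' where i': "i = Suc i'" using i1 by (cases i) auto
    have "(\<Sum>j<n. cl j r) = (\<Sum>j<i. cl j r)"
      using sum_split[of i n "\<lambda>j. cl j r"] assms(1) z by simp
    also have "... = (\<Sum>j<i-1. cl j r) + cl (i-1) r"
      using i' by simp
    also have "... < real (i-1) + 1"
    proof -
      have "(\<Sum>j<i-1. cl j r) \<le> of_nat (card {..<i-1}) * 1"
        by (rule sum_bounded_above) (rule cl_bounds)
      then show ?thesis using lt by simp
    qed
    also have "... = real i" using i1 by simp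
    finally show False using assms(3) by simp
  qed
  show "2^m * r \<le> real ((i+1)*q) - 1"
  proof (rule ccontr)
    assume c: "\<not> ?thesis"
    have o: "cl j r = 1" if "j < i" for j
    proof (rule cl1)
      have "p j \<le> p (i-1)" using that by (intro p_mono) simp
      moreover have "p (i-1) = real (i*q) - 1" using that p_i[of "i-1"] by simp
      moreover have "real ((i+1)*q) - 1 \<ge> real (i*q)" using Q by simp
      ultimately show "p j + 1 \<le> 2^m*r" using c by simp
    qed
    have pos: "cl i r > 0" using c p_i[of i] by (simp add: cl_def)
    have "(\<Sum>j<n. cl j r) \<ge> (\<Sum>j<Suc i. cl j r)"
      using sum_split[of "Suc i" n "\<lambda>j. cl j r"] assms(1) cl_bounds(1)
      by (simp add: sum_nonneg)
    also have "(\<Sum>j<Suc i. cl j r) = (\<Sum>j<i. cl j r) + cl i r" by simp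
    also have "(\<Sum>j<i. cl j r) = real i" using o by simp
    finally show False using assms(3) pos by simp
  qed
qed


definition "Ii i = {real (i*q) / 2^m .. (real ((i+1)*q) - 1) / 2^m}"

lemma cl_cont: "continuous_on UNIV (\<lambda>r. \<Sum>j<n. cl j r)"
  unfolding cl_def by (intro continuous_intros)

lemma F_closed: "closed {r. fnn_fun N r = c}"
  unfolding F_eq by (rule closed_Collect_eq) (use cl_cont in \<open>auto intro: continuous_intros\<close>)

lemma Lset_meas: "{r \<in> {0..1::real}. fnn_fun N r \<in> A} \<in> fmeasurable lborel" if "finite A"
proof -
  have "{r \<in> {0..1::real}. fnn_fun N r \<in> A} = {0..1} \<inter> (\<Union>c\<in>A. {r. fnn_fun N r = c})" by auto
  moreover have "closed ({0..1::real} \<inter> (\<Union>c\<in>A. {r. fnn_fun N r = c}))"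
    using that F_closed by (intro closed_Int closed_UN) auto
  ultimately have "{r \<in> {0..1::real}. fnn_fun N r \<in> A} \<in> sets lborel" by (simp add: borel_closed)
  moreover have h: "{0..1::real} \<in> fmeasurable lborel" by (intro fmeasurable_compact) simp
  ultimately show ?thesis by (intro fmeasurableI2[OF h]) auto
qed

lemma Ii_sub: "i < n \<Longrightarrow> Ii i \<subseteq> {r \<in> {0..1::real}. fnn_fun N r = real i}"
proof
  fix r assume i: "i < n" and r: "r \<in> Ii i"
  have "(i+1)*q \<le> n*q" using i by (intro mult_le_mono1) simp
  then have "(i+1)*q \<le> 2^m" using nq_le by linarith
  then have up: "real ((i+1)*q) \<le> 2^m" by (metis of_nat_le_iff of_nat_numeral of_nat_power)
  have "real (i*q) \<le> 2^m * r" "2^m * r \<le> real ((i+1)*q) - 1" using r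
    by (auto simp: Ii_def field_simps)
  moreover have "0 \<le> r" "r \<le> 1"
  proof -
    have "real (i*q) / 2^m \<le> r" using r unfolding Ii_def by auto
    moreover have "0 \<le> real (i*q) / 2^m" by simp
    ultimately show "0 \<le> r" by linarith
    have "r \<le> (real ((i+1)*q) - 1) / 2^m" using r by (auto simp: Ii_def)
    also have "... \<le> 1" using up by simp
    finally show "r \<le> 1" .
  qed
  ultimately show "r \<in> {r \<in> {0..1::real}. fnn_fun N r = real i}" using level_exact i F_eq by auto
qed

lemma Ii_meas: "measure lborel (Ii i) = (real q - 1) / 2^m"
proof -
  have "real (i*q) / 2^m \<le> (real ((i+1)*q) - 1) / 2^m" using q_pos by (simp add: divide_right_mono)
  then show ?thesis unfolding Ii_def by (simp add: diff_divide_distrib[symmetric] algebra_simps)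
qed

lemma Lset_upper: "i < n \<Longrightarrow> {r \<in> {0..1::real}. fnn_fun N r = real i} \<subseteq> Ii i"
proof
  fix r assume i: "i < n" and r: "r \<in> {r \<in> {0..1::real}. fnn_fun N r = real i}"
  then have "real (i*q) \<le> 2^m * r" "2^m * r \<le> real ((i+1)*q) - 1"
    using level_upper[of i r] F_eq by auto
  then show "r \<in> Ii i" by (auto simp: Ii_def field_simps)
qed

lemma Ii_fm: "Ii i \<in> fmeasurable lborel" unfolding Ii_def by (intro fmeasurable_compact) simp

lemma Ii_sets: "Ii i \<in> sets lborel" using Ii_fm by (rule fmeasurableD)

lemma ar1: "1 - 2 powi (- int k) \<le> real n * (real q - 1) / 2^m"
proof -
  have A: "2^m + 1 \<le> n * q + n" using nq_gt by (simp add: algebra_simps)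
  have "real (2^m + 1) \<le> real (n * q + n)" by (subst of_nat_le_iff) (rule A)
  then have A': "(2::real)^m + 1 \<le> real n * real q + real n" by simp
  have "n < 2^n" by simp
  then have "2 * n \<le> 2^(n+1)" by simp
  then have "real (2 * n) \<le> real (2^(n+1))" by (subst of_nat_le_iff)
  then have Bn: "2 * real n \<le> 2^(n+1)" by simp
  have C: "(2::real)^m = 2^k * 2^(n+1)" by (simp add: m_def power_add)
  have P: "(2::real)^m > 0" by simp
  have "2 powi (- int k) = 1 / (2::real)^k" by (simp add: power_int_minus divide_inverse)
  also have "... = 2^(n+1) / 2^m" using C by simp
  finally have e: "2 powi (- int k) = 2^(n+1) / (2::real)^m" .
  have "1 - 2^(n+1) / (2::real)^m = (2^m - 2^(n+1)) / 2^m" using P by (simp add: diff_divide_distrib)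
  also have "... \<le> real n * (real q - 1) / 2^m"
  proof (rule divide_right_mono)
    have "2^m - 2^(n+1) \<le> real n * real q - real n" using A' Bn by linarith
    then show "2^m - 2^(n+1) \<le> real n * (real q - 1)" by (simp add: right_diff_distrib)
  qed simp
  finally show ?thesis using e by simp
qed

lemma ar2: "(real q - 1) / 2^m \<le> 1 / real n"
proof -
  have "real n * real q \<le> 2^m" using nq_le by (metis of_nat_le_iff of_nat_mult of_nat_numeral of_nat_power)
  then have "real q \<le> 2^m / real n" using npos by (simp add: field_simps)
  then have "real q - 1 \<le> 2^m / real n" by simp
  then show ?thesis using npos by (simp add: field_simps)
qed

lemma level_bounds: assumes "i < n"
  shows "(1 - 2 powi (- int k)) / real n \<le> measure lborel {r \<in> {0..1::real}. fnn_fun N r = real i}"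
    "measure lborel {r \<in> {0..1::real}. fnn_fun N r = real i} \<le> 1 / real n"
proof -
  have fm: "{r \<in> {0..1::real}. fnn_fun N r = real i} \<in> fmeasurable lborel"
    using Lset_meas[of "{real i}"] by simp
  have "(1 - 2 powi (- int k)) / real n \<le> (real q - 1) / 2^m"
    using ar1 npos by (simp add: field_simps)
  also have "... = measure lborel (Ii i)" by (simp add: Ii_meas)
  also have "... \<le> measure lborel {r \<in> {0..1::real}. fnn_fun N r = real i}"
    by (rule measure_mono_fmeasurable[OF Ii_sub[OF assms] _ fm]) (use Ii_sets in auto)
  finally show "(1 - 2 powi (- int k)) / real n \<le> measure lborel {r \<in> {0..1::real}. fnn_fun N r = real i}" .
  have "measure lborel {r \<in> {0..1::real}. fnn_fun N r = real i} \<le> measure lborel (Ii i)"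
    by (rule measure_mono_fmeasurable[OF Lset_upper[OF assms] _ Ii_fm]) (use fm in auto)
  also have "... \<le> 1 / real n" using ar2 by (simp add: Ii_meas)
  finally show "measure lborel {r \<in> {0..1::real}. fnn_fun N r = real i} \<le> 1 / real n" .
qed

lemma total_bound:
  "1 - 2 powi (- int k) \<le> measure lborel {r \<in> {0..1::real}. fnn_fun N r \<in> real ` {0..<n}}"
proof -
  have fm: "{r \<in> {0..1::real}. fnn_fun N r \<in> real ` {0..<n}} \<in> fmeasurable lborel"
    by (rule Lset_meas) simp
  have disj: "disjoint_family_on Ii {..<n}"
  proof (unfold disjoint_family_on_def, intro ballI impI)
    have key: "Ii i \<inter> Ii j = {}" if "i < j" for i j
    proof -
      have "(i+1)*q \<le> j*q" using that by (intro mult_le_mono1) simp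
      then have "real ((i+1)*q) \<le> real (j*q)" by linarith
      then have "(real ((i+1)*q) - 1) / 2^m < real (j*q) / 2^m" by (simp add: divide_strict_right_mono)
      then show ?thesis unfolding Ii_def by auto
    qed
    fix i j assume "i \<in> {..<n}" "j \<in> {..<n}" "i \<noteq> j"
    then show "Ii i \<inter> Ii j = {}" using key[of i j] key[of j i] by (auto simp: linorder_neq_iff)
  qed
  have "1 - 2 powi (- int k) \<le> real n * (real q - 1) / 2^m" by (rule ar1)
  also have "... = (\<Sum>i<n. measure lborel (Ii i))" by (simp add: Ii_meas)
  also have "... = measure lborel (\<Union>i<n. Ii i)"
    by (rule measure_finite_Union[symmetric]) (use disj Ii_sets Ii_fm fmeasurableD2 in auto)
  also have "... \<le> measure lborel {r \<in> {0..1::real}. fnn_fun N r \<in> real ` {0..<n}}"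
  proof (rule measure_mono_fmeasurable[OF _ _ fm])
    show "(\<Union>i<n. Ii i) \<subseteq> {r \<in> {0..1::real}. fnn_fun N r \<in> real ` {0..<n}}"
      using Ii_sub by fastforce
    show "(\<Union>i<n. Ii i) \<in> sets lborel" using Ii_sets by (intro sets.finite_UN) auto
  qed
  finally show ?thesis .
qed




lemma jj_lt: "1 \<le> v \<Longrightarrow> v \<le> Om \<Longrightarrow> jj v < n"
  unfolding jj_def Om_def using B_ge by (simp add: less_mult_imp_div_less)

lemma noninput: "fnn_noninput N = {1..Om}"
  unfolding fnn_noninput_def sources by (auto simp: N_def)

lemma E_sub: "E \<subseteq> {..Om} \<times> {..Om}"
  using E_lt by (auto simp: E_def) 

lemma wf: "rational_pwl_fnn N"
proof -
  have "finite (nodes N)" by (simp add: N_def)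
  moreover have "edges N \<subseteq> nodes N \<times> nodes N" using E_sub by (simp add: N_def)
  moreover have "\<forall>(u,v)\<in>edges N. u < v" using E_lt by (auto simp: N_def)
  moreover have "dyadic (weight N e)" for e
    unfolding N_def W_def
    by (auto split: prod.splits intro: dyadicI[of _ 1 0] dyadicI[of _ "-1" 0] dyadicI[of _ 2 0])
  moreover have "dyadic (bias N v)" for v
  proof -
    have h: "- a j = of_int (- (int ((j+1)*q) - 1)) / 2^m" for j by (simp add: a_def p_def field_simps)
    have "dyadic (Bi v)"
    proof (cases "tt v = 0")
      case True
      then have "Bi v = - a (jj v)" by (simp add: Bi_def)
      then show ?thesis using h[of "jj v"] dyadicI by metis
    next
      case False
      then have "Bi v = of_int (-1) / 2^0 \<or> Bi v = of_int 0 / 2^0" by (simp add: Bi_def)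
      then show ?thesis using dyadicI by blast
    qed
    then show ?thesis by (simp add: N_def)
  qed
  ultimately show ?thesis unfolding rational_pwl_fnn_def fnn_wf_def using relu_pwl by (simp add: N_def)
qed

lemma dim11: "fnn_dim11 N" unfolding fnn_dim11_def sources sinks by simp
lemma relu_only: "fnn_relu_only N" unfolding fnn_relu_only_def by (simp add: N_def)

lemma p_range: "j < n \<Longrightarrow> 0 \<le> p j \<and> p j \<le> 2^m - 1"
proof -
  assume j: "j < n"
  have "(j+1)*q \<le> n*q" using j by (intro mult_le_mono1) simp
  then have "(j+1)*q \<le> 2^m" using nq_le by linarith
  then have "real ((j+1)*q) \<le> real (2^m)" by (subst of_nat_le_iff)
  moreover have "1 \<le> (j+1)*q" using q_pos by simp
  then have "1 \<le> real ((j+1)*q)" by (metis of_nat_1 of_nat_le_iff)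
  ultimately show ?thesis unfolding p_def by simp
qed

lemma Bi_bits: assumes "1 \<le> v" "v \<le> Om" shows "dyadic_bits (Bi v) \<le> 2*m + 3"
proof -
  have j: "jj v < n" using jj_lt assms by simp
  consider "tt v = 0" | "tt v \<noteq> 0" "tt v = m+1" | "tt v \<noteq> 0" "tt v \<noteq> m+1" by blast
  then show ?thesis
  proof cases
    case 1
    define z where "z = int ((jj v + 1)*q) - 1"
    have pz: "p (jj v) = of_int z" unfolding z_def p_def by simp
    have "real_of_int 0 \<le> real_of_int z" "real_of_int z \<le> real_of_int (2^m - 1)"
      using p_range[OF j] pz by auto
    then have "0 \<le> z" "z \<le> 2^m - 1" by (simp_all only: of_int_le_iff)
    then have "\<bar>-z\<bar> < 2^m" by simp
    moreover have "Bi v = of_int (-z) / 2^m" using 1 by (simp add: Bi_def a_def pz)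
    ultimately show ?thesis using dyadic_bits_le'[of "Bi v" "-z" m m] by simp
  next
    case 2
    have "Bi v = of_int (-1) / 2^0" using 2 by (simp add: Bi_def)
    then show ?thesis using dyadic_bits_le'[of "Bi v" "-1" 0 1] by simp
  next
    case 3
    have "Bi v = of_int 0 / 2^0" using 3 by (simp add: Bi_def)
    then show ?thesis using dyadic_bits_le'[of "Bi v" "0" 0 0] by simp
  qed
qed

lemma Bi_abs: assumes "1 \<le> v" "v \<le> Om" shows "\<bar>Bi v\<bar> \<le> 1"
proof -
  have j: "jj v < n" using jj_lt assms by simp
  have "0 \<le> a (jj v)" "a (jj v) \<le> 1" using p_range[OF j] by (auto simp: a_def field_simps)
  then show ?thesis by (auto simp: Bi_def)
qed

lemma W_bits: "dyadic_bits (W e) \<le> 4"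
proof -
  have "W e = of_int (-1) / 2^0 \<or> W e = of_int 1 / 2^0 \<or> W e = of_int 2 / 2^0"
    by (auto simp: W_def split: prod.splits)
  then show ?thesis
  proof (elim disjE)
    assume h: "W e = of_int (-1) / 2^0"
    show ?thesis using dyadic_bits_le'[OF h, of 2] by simp
  next
    assume h: "W e = of_int 1 / 2^0"
    show ?thesis using dyadic_bits_le'[OF h, of 2] by simp
  next
    assume h: "W e = of_int 2 / 2^0"
    show ?thesis using dyadic_bits_le'[OF h, of 2] by simp
  qed
qed

lemma W_abs: "\<bar>W e\<bar> \<le> 2" by (auto simp: W_def split: prod.splits)

lemma cardE: "card E \<le> (Om+1)^2"
proof -
  have "card E \<le> card ({..Om} \<times> {..Om})" by (rule card_mono) (use E_sub in auto)
  then show ?thesis by (simp add: card_cartesian_product power2_eq_square)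
qed

lemma finE: "finite E" using E_sub finite_subset by blast

lemma bitsize: "fnn_bitsize N \<le> (Om+1)*(Om+1) + (Om+1)*(2*m+15) + (Om+1)^2 * (2*(Om+1)+4)"
proof -
  have s1: "(\<Sum>v\<in>nodes N. nat_bits v) \<le> (Om+1)*(Om+1)"
  proof -
    have "(\<Sum>v\<in>{..Om}. nat_bits v) \<le> of_nat (card {..Om}) * (Om+1)"
      by (rule sum_bounded_above) (metis atMost_iff add_le_mono1 order_trans nat_bits_le)
    then show ?thesis by (simp add: N_def)
  qed
  have s2: "(\<Sum>v\<in>fnn_noninput N. dyadic_bits (bias N v) + act_bits (act N v)) \<le> (Om+1)*(2*m+15)"
  proof -
    have "(\<Sum>v\<in>{1..Om}. dyadic_bits (Bi v) + act_bits relu) \<le> of_nat (card {1..Om}) * (2*m+15)"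
      by (rule sum_bounded_above) (use Bi_bits act_bits_relu in force)
    moreover have "card {1..Om} * (2*m+15) \<le> (Om+1)*(2*m+15)" by simp
    ultimately show ?thesis unfolding noninput by (simp add: N_def)
  qed
  have s3: "(\<Sum>e\<in>edges N. nat_bits (fst e) + nat_bits (snd e) + dyadic_bits (weight N e))
      \<le> (Om+1)^2 * (2*(Om+1)+4)"
  proof -
    have b: "nat_bits (fst e) + nat_bits (snd e) + dyadic_bits (W e) \<le> 2*(Om+1)+4" if "e \<in> E" for e
    proof -
      have "fst e \<le> Om" "snd e \<le> Om" using that E_sub by auto
      moreover note nat_bits_le[of "fst e"] nat_bits_le[of "snd e"] W_bits[of e]
      ultimately show ?thesis by simp
    qed
    have "(\<Sum>e\<in>E. nat_bits (fst e) + nat_bits (snd e) + dyadic_bits (W e)) \<le> of_nat (card E) * (2*(Om+1)+4)"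
      by (rule sum_bounded_above) (use b in force)
    also have "... \<le> (Om+1)^2 * (2*(Om+1)+4)" using cardE by (simp add: mult_le_mono1)
    finally show ?thesis by (simp add: N_def)
  qed
  show ?thesis unfolding fnn_bitsize_def using s1 s2 s3 by linarith
qed

lemma Max_ins_le: "finite A \<Longrightarrow> (\<And>x. x \<in> A \<Longrightarrow> x \<le> K) \<Longrightarrow> 0 \<le> (K::real) \<Longrightarrow> Max (insert 0 A) \<le> K"
  by (simp add: Max_le_iff)

lemma weight: "fnn_weight N \<le> real (Om+1) + real ((Om+1)^2) + 4"
proof -
  have c1: "card (nodes N) = Om + 1" by (simp add: N_def)
  have c2: "real (card (edges N)) \<le> real ((Om+1)^2)" using cardE by (simp add: N_def del: of_nat_power)
  have m1: "Max (insert 0 ((\<lambda>e. \<bar>weight N e\<bar>) ` edges N)) \<le> 2"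
    by (rule Max_ins_le) (use finE W_abs in \<open>auto simp: N_def\<close>)
  have m2: "Max (insert 0 ((\<lambda>v. \<bar>bias N v\<bar>) ` fnn_noninput N)) \<le> 1"
    unfolding noninput by (rule Max_ins_le) (use Bi_abs in \<open>auto simp: N_def\<close>)
  have m3: "Max (insert 0 ((\<lambda>v. real (lip_const (act N v)) + act N v 0) ` fnn_noninput N)) \<le> 1"
    unfolding noninput by (rule Max_ins_le) (use lip_relu in \<open>auto simp: N_def relu_def\<close>)
  show ?thesis unfolding fnn_weight_def using c1 c2 m1 m2 m3 by linarith
qed

lemma size: "fnn_size N \<le> 2000 * (real n + real k)^6"
proof -
  define X where "X = n + k"
  define Y where "Y = X * X"
  have X2: "X \<ge> 2" using npos kpos by (simp add: X_def)
  have Y2: "Y \<ge> 2 * X" unfolding Y_def using X2 by simp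
  have "Om = n * (X + 4)" by (simp add: Om_def B_def m_def X_def)
  also have "... \<le> X * (X + 4)" by (intro mult_le_mono1) (simp add: X_def)
  finally have "Om \<le> Y + 4 * X" by (simp add: Y_def algebra_simps)
  define P where "P = 8 * Y"
  have a: "Om + 1 \<le> P" "2*m+15 \<le> P" "2*(Om+1)+4 \<le> P" using \<open>Om \<le> Y + 4 * X\<close> Y2 X2
    by (simp_all add: P_def m_def X_def)
  have P1: "P \<ge> 1" using a by simp
  have "fnn_bitsize N \<le> P*P + P*P + P^2*P"
  proof -
    have "(Om+1)*(Om+1) \<le> P*P" using a by (intro mult_le_mono) simp_all
    moreover have "(Om+1)*(2*m+15) \<le> P*P" using a by (intro mult_le_mono) simp_all
    moreover have "(Om+1)^2 * (2*(Om+1)+4) \<le> P^2*P" using a by (intro mult_le_mono power_mono) simp_all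
    ultimately show ?thesis using bitsize by linarith
  qed
  also have "... \<le> 3 * P^3"
  proof -
    have "P*P \<le> P*P*P" using P1 by simp
    moreover have "P*P*P = P^3" "P^2*P = P^3" by (simp_all add: power3_eq_cube power2_eq_square)
    ultimately show ?thesis by linarith
  qed
  finally have bs: "fnn_bitsize N \<le> 3 * P^3" .
  have "fnn_weight N \<le> real (Om+1) + real ((Om+1)^2) + 4" by (rule weight)
  also have "... \<le> real (3 * P^3)"
  proof -
    have "(Om+1)^2 \<le> P^2" using a by (intro power_mono) simp_all
    moreover have "P^2 \<le> P^3" using P1 by (intro power_increasing) simp_all
    moreover have "P \<le> P^2" unfolding power2_eq_square by (rule le_square)
    moreover have "4 \<le> P" using a by simp
    ultimately have "Om + 1 + (Om+1)^2 + 4 \<le> 3 * P^3" using a by linarith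
    then have "real (Om + 1 + (Om+1)^2 + 4) \<le> real (3 * P^3)" by (subst of_nat_le_iff)
    moreover have "real (Om + 1 + (Om+1)^2 + 4) = real (Om+1) + real ((Om+1)^2) + 4" by simp
    ultimately show ?thesis by linarith
  qed
  finally have ws: "fnn_weight N \<le> real (3 * P^3)" .
  have "P^3 = 512 * Y^3" by (simp add: P_def power_mult_distrib)
  moreover have "Y^3 = X^6" by (simp add: Y_def power_mult_distrib flip: power_add)
  ultimately have "3 * P^3 = 1536 * X^6" by simp
  then have "real (3 * P^3) = 1536 * (real n + real k)^6" by (simp add: X_def)
  moreover have "real (fnn_bitsize N) \<le> real (3 * P^3)" using bs by (subst of_nat_le_iff)
  ultimately have "fnn_size N \<le> 1536 * (real n + real k)^6" unfolding fnn_size_def using ws by simp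
  also have "... \<le> 2000 * (real n + real k)^6" by simp
  finally show ?thesis .
qed


end

theorem lemma8p3:
  "\<exists>(c::nat) (d::nat). \<forall>(k::nat) (n::nat). k > 0 \<longrightarrow> n > 0 \<longrightarrow>
     (\<exists>F. rational_pwl_fnn F \<and> fnn_dim11 F \<and> fnn_relu_only F
        \<and> fnn_size F \<le> real c * (real n + real k) ^ d
        \<and> measure lborel {r \<in> {0..1::real}. fnn_fun F r \<in> real ` {0..<n}} \<ge> 1 - 2 powi (- int k)
        \<and> (\<forall>i \<in> {0..<n}.
             (1 - 2 powi (- int k)) / real n \<le> measure lborel {r \<in> {0..1::real}. fnn_fun F r = real i}
           \<and> measure lborel {r \<in> {0..1::real}. fnn_fun F r = real i} \<le> 1 / real n))"
proof -
  have "\<forall>(k::nat) (n::nat). k > 0 \<longrightarrow> n > 0 \<longrightarrow>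
     (\<exists>F. rational_pwl_fnn F \<and> fnn_dim11 F \<and> fnn_relu_only F
        \<and> fnn_size F \<le> real (2000::nat) * (real n + real k) ^ (6::nat)
        \<and> measure lborel {r \<in> {0..1::real}. fnn_fun F r \<in> real ` {0..<n}} \<ge> 1 - 2 powi (- int k)
        \<and> (\<forall>i \<in> {0..<n}.
             (1 - 2 powi (- int k)) / real n \<le> measure lborel {r \<in> {0..1::real}. fnn_fun F r = real i}
           \<and> measure lborel {r \<in> {0..1::real}. fnn_fun F r = real i} \<le> 1 / real n))"
  proof (intro allI impI)
    fix k n :: nat
    assume k: "k > 0" and n: "n > 0"
    interpret C: cons n k using k n by unfold_locales
    show "\<exists>F. rational_pwl_fnn F \<and> fnn_dim11 F \<and> fnn_relu_only F
        \<and> fnn_size F \<le> real (2000::nat) * (real n + real k) ^ (6::nat)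
        \<and> measure lborel {r \<in> {0..1::real}. fnn_fun F r \<in> real ` {0..<n}} \<ge> 1 - 2 powi (- int k)
        \<and> (\<forall>i \<in> {0..<n}.
             (1 - 2 powi (- int k)) / real n \<le> measure lborel {r \<in> {0..1::real}. fnn_fun F r = real i}
           \<and> measure lborel {r \<in> {0..1::real}. fnn_fun F r = real i} \<le> 1 / real n)"
      using C.wf C.dim11 C.relu_only C.size C.total_bound C.level_bounds by (intro exI[of _ C.N]) auto
  qed
  then show ?thesis by blast
qed

end
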